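(* Let $T_9=\mathbf{e}^1_1\otimes(\mathbf{e}^2_1\otimes\mathbf{e}^3_1+\mathbf{e}^2_2\otimes\mathbf{e}^3_3)+\mathbf{e}^1_2\otimes(\mathbf{e}^2_1\otimes\mathbf{e}^3_2+\mathbf{e}^2_2\otimes\mathbf{e}^3_4)\in\mathbb{C}^2\otimes\mathbb{C}^2\otimes\mathbb{C}^4$ and let $f(\mathbf{x},\mathbf{y},\mathbf{z})=x_1y_1z_1+x_2y_1z_2+x_1y_2z_3+x_2y_2z_4$ for $\mathbf{x},\mathbf{y}\in\mathbb{C}^2,\mathbf{z}\in\mathbb{C}^4$. Let $T\in\mathbb{C}^2\otimes\mathbb{C}^2\otimes\mathbb{C}^4$ and $(A,B,C)\in\mathrm{GL}_2\times\mathrm{GL}_2\times\mathrm{GL}_4$ with $(A,B,C)\cdot T=T_9$. Then a rank-one tensor $\mathbf{a}\otimes\mathbf{b}\otimes\mathbf{c}$ lies in the forbidden locus of $T$ if and only if $f(A\mathbf{a},B\mathbf{b},C\mathbf{c})=0$ (equivalently $\langle (A^T\otimes B^T\otimes C^T)\cdot T_9^*,\mathbf{a}\otimes\mathbf{b}\otimes\mathbf{c}\rangle=0$, where $T_9^*$ is $T_9$ written in the dual basis).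
   Context: $\mathbf{e}^i_j$ denotes the $j$-th standard basis vector of the $i$-th factor. The group $\mathrm{GL}_{n_1}\times\mathrm{GL}_{n_2}\times\mathrm{GL}_{n_3}$ acts by $(A,B,C)\cdot(\mathbf{a}\otimes\mathbf{b}\otimes\mathbf{c})=A\mathbf{a}\otimes B\mathbf{b}\otimes C\mathbf{c}$, extended linearly. The rank of a tensor is the minimal number of rank-one tensors summing to it. A rank-one tensor $P$ is in the forbidden locus of $T$ if $\mathrm{rk}(T-\lambda P)\ge\mathrm{rk}(T)$ for all $\lambda\in\mathbb{C}$. (Here $\mathrm{rk}(T)=4$.) *)

theory Defs
  imports "HOL-Analysis.Analysis"
begin

text \<open>Tensors in C^n1 (x) C^n2 (x) C^n3 are represented as elements of
  complex^'c^'b^'a, with entry T $ i $ j $ k (i indexes the first factor).\<close>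

definition outer3 :: "complex^'a \<Rightarrow> complex^'b \<Rightarrow> complex^'c \<Rightarrow> complex^'c^'b^'a" where
  "outer3 a b c = (\<chi> i j k. a $ i * b $ j * c $ k)"

definition tensor_rank :: "complex^'c^'b^'a \<Rightarrow> nat" where
  "tensor_rank T = (LEAST r. \<exists>a b c. T = (\<Sum>l<r. outer3 (a l) (b l) (c l)))"

text \<open>Action of GL x GL x GL: (A,B,C).(a (x) b (x) c) = Aa (x) Bb (x) Cc, extended linearly.\<close>
definition tensor_act ::
  "complex^'a^'a \<Rightarrow> complex^'b^'b \<Rightarrow> complex^'c^'c \<Rightarrow> complex^'c^'b^'a \<Rightarrow> complex^'c^'b^'a" where
  "tensor_act A B C T = (\<chi> i j k. \<Sum>i'\<in>UNIV. \<Sum>j'\<in>UNIV. \<Sum>k'\<in>UNIV.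
      A $ i $ i' * B $ j $ j' * C $ k $ k' * T $ i' $ j' $ k')"

definition scale3 :: "complex \<Rightarrow> complex^'c^'b^'a \<Rightarrow> complex^'c^'b^'a" where
  "scale3 s P = (\<chi> i j k. s * P $ i $ j $ k)"

definition forbidden_locus :: "complex^'c^'b^'a \<Rightarrow> (complex^'c^'b^'a) set" where
  "forbidden_locus T = {P. tensor_rank P = 1 \<and>
      (\<forall>s::complex. tensor_rank (T - scale3 s P) \<ge> tensor_rank T)}"

text \<open>The tensor T_9 in C^2 (x) C^2 (x) C^4; basis vector e_j is axis (j-1) 1.\<close>
definition T9 :: "complex^4^2^2" where
  "T9 = outer3 (axis 0 1) (axis 0 1) (axis 0 1) + outer3 (axis 0 1) (axis 1 1) (axis 2 1)
      + outer3 (axis 1 1) (axis 0 1) (axis 1 1) + outer3 (axis 1 1) (axis 1 1) (axis 3 1)"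

definition f9 :: "complex^2 \<Rightarrow> complex^2 \<Rightarrow> complex^4 \<Rightarrow> complex" where
  "f9 x y z = x$0 * y$0 * z$0 + x$1 * y$0 * z$1 + x$0 * y$1 * z$2 + x$1 * y$1 * z$3"

end

theory Submission
  imports Defs
begin
lemma exh4: fixes x :: 4 shows "x = 0 \<or> x = 1 \<or> x = 2 \<or> x = 3"
proof (induct x)
  case (of_int z)
  then have "z = 0 \<or> z = 1 \<or> z = 2 \<or> z = 3" by fastforce
  then show ?case by auto
qed
lemma exh2: fixes x :: 2 shows "x = 0 \<or> x = 1"
proof (induct x)
  case (of_int z)
  then have "z = 0 \<or> z = 1" by fastforce
  then show ?case by auto
qed
lemma UNIV4: "(UNIV::4 set) = {0,1,2,3}" using exh4 by auto
lemma UNIV2: "(UNIV::2 set) = {0,1}" using exh2 by auto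
lemma sum4: "sum f (UNIV::4 set) = f 0 + f 1 + f 2 + f 3" unfolding UNIV4 by (simp add: ac_simps)
lemma sum2: "sum f (UNIV::2 set) = f 0 + f 1" unfolding UNIV2 by (simp add: ac_simps)
lemma all4: "(\<forall>i::4. P i) \<longleftrightarrow> P 0 \<and> P 1 \<and> P 2 \<and> P 3" by (metis exh4)
lemma all2: "(\<forall>i::2. P i) \<longleftrightarrow> P 0 \<and> P 1" by (metis exh2)

lemma sum3_prod: "(\<Sum>x\<in>A. \<Sum>y\<in>B. \<Sum>z\<in>C. g x y z) = (\<Sum>p\<in>A\<times>B\<times>C. g (fst p) (fst (snd p)) (snd (snd p)))"
  by (simp add: sum.cartesian_product case_prod_beta)

lemma swap6: "(\<Sum>i'\<in>A. \<Sum>j'\<in>B. \<Sum>k'\<in>C. \<Sum>i''\<in>D. \<Sum>j''\<in>E. \<Sum>k''\<in>G. F i' j' k' i'' j'' k'')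
      = (\<Sum>i''\<in>D. \<Sum>j''\<in>E. \<Sum>k''\<in>G. \<Sum>i'\<in>A. \<Sum>j'\<in>B. \<Sum>k'\<in>C. F i' j' k' i'' j'' k'')"
proof -
  let ?H = "\<lambda>p q. F (fst p) (fst (snd p)) (snd (snd p)) (fst q) (fst (snd q)) (snd (snd q))"
  have "(\<Sum>i'\<in>A. \<Sum>j'\<in>B. \<Sum>k'\<in>C. \<Sum>i''\<in>D. \<Sum>j''\<in>E. \<Sum>k''\<in>G. F i' j' k' i'' j'' k'')
     = (\<Sum>p\<in>A\<times>B\<times>C. \<Sum>q\<in>D\<times>E\<times>G. ?H p q)"
    by (subst sum3_prod, rule sum.cong, simp, rule sum3_prod)
  also have "\<dots> = (\<Sum>q\<in>D\<times>E\<times>G. \<Sum>p\<in>A\<times>B\<times>C. ?H p q)" by (rule sum.swap)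
  also have "\<dots> = (\<Sum>i''\<in>D. \<Sum>j''\<in>E. \<Sum>k''\<in>G. \<Sum>i'\<in>A. \<Sum>j'\<in>B. \<Sum>k'\<in>C. F i' j' k' i'' j'' k'')"
    by (subst sum3_prod, rule sum.cong, simp, subst sum3_prod, simp)
  finally show ?thesis .
qed

lemma act_outer: "tensor_act A B C (outer3 a b c) = outer3 (A *v a) (B *v b) (C *v c)"
  unfolding tensor_act_def outer3_def
  by (simp add: vec_eq_iff matrix_vector_mult_def sum_distrib_left sum_distrib_right mult_ac)

lemma act_add: "tensor_act A B C (X + Y) = tensor_act A B C X + tensor_act A B C Y"
  unfolding tensor_act_def
  by (simp add: vec_eq_iff distrib_left sum.distrib)

lemma act_zero: "tensor_act A B C 0 = 0"
  unfolding tensor_act_def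
  by (simp add: vec_eq_iff)

lemma act_diff: "tensor_act A B C (X - scale3 s Y) = tensor_act A B C X - scale3 s (tensor_act A B C Y)"
  unfolding tensor_act_def scale3_def
  by (simp add: vec_eq_iff right_diff_distrib sum_subtractf sum_distrib_left mult_ac)

lemma act_comp: "tensor_act A B C (tensor_act A' B' C' X) = tensor_act (A**A') (B**B') (C**C') X"
proof -
  have "(\<Sum>i'\<in>UNIV. \<Sum>j'\<in>UNIV. \<Sum>k'\<in>UNIV. A $ i $ i' * B $ j $ j' * C $ k $ k' *
     (\<Sum>i''\<in>UNIV. \<Sum>j''\<in>UNIV. \<Sum>k''\<in>UNIV. A' $ i' $ i'' * B' $ j' $ j'' * C' $ k' $ k'' * X $ i'' $ j'' $ k''))
   = (\<Sum>i''\<in>UNIV. \<Sum>j''\<in>UNIV. \<Sum>k''\<in>UNIV. (A**A') $ i $ i'' * (B**B') $ j $ j'' * (C**C') $ k $ k'' * X $ i'' $ j'' $ k'')"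
    for i j k
  proof -
    have "?thesis = ((\<Sum>i'\<in>UNIV. \<Sum>j'\<in>UNIV. \<Sum>k'\<in>UNIV. \<Sum>i''\<in>UNIV. \<Sum>j''\<in>UNIV. \<Sum>k''\<in>UNIV. A $ i $ i' * B $ j $ j' * C $ k $ k' *
     (A' $ i' $ i'' * B' $ j' $ j'' * C' $ k' $ k'' * X $ i'' $ j'' $ k''))
   = (\<Sum>i''\<in>UNIV. \<Sum>j''\<in>UNIV. \<Sum>k''\<in>UNIV. \<Sum>i'\<in>UNIV. \<Sum>j'\<in>UNIV. \<Sum>k'\<in>UNIV. A $ i $ i' * B $ j $ j' * C $ k $ k' *
     (A' $ i' $ i'' * B' $ j' $ j'' * C' $ k' $ k'' * X $ i'' $ j'' $ k'')))"
      by (simp add: matrix_matrix_mult_def sum_distrib_left sum_distrib_right mult_ac)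
    then show ?thesis using swap6 by simp
  qed
  then show ?thesis unfolding tensor_act_def by (simp add: vec_eq_iff)
qed

lemma ifmul: "(if P then 1 else 0) * (y::complex) = (if P then y else 0)" by simp

lemma matsum: "(\<Sum>k'\<in>UNIV. mat 1 $ k $ k' * (Y k'::complex)) = Y k"
  by (simp add: mat_def ifmul)

lemma act_id: "tensor_act (mat 1) (mat 1) (mat 1) X = X"
proof -
  have "(\<Sum>i'\<in>UNIV. \<Sum>j'\<in>UNIV. \<Sum>k'\<in>UNIV. mat 1 $ i $ i' * mat 1 $ j $ j' * mat 1 $ k $ k' * X $ i' $ j' $ k')
    = (\<Sum>i'\<in>UNIV. mat 1 $ i $ i' * (\<Sum>j'\<in>UNIV. mat 1 $ j $ j' * (\<Sum>k'\<in>UNIV. mat 1 $ k $ k' * X $ i' $ j' $ k')))"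
    for i j k by (simp add: sum_distrib_left mult.assoc)
  then show ?thesis unfolding tensor_act_def by (simp add: vec_eq_iff matsum)
qed

definition decomp :: "complex^'c^'b^'a \<Rightarrow> nat \<Rightarrow> bool" where
  "decomp X r = (\<exists>p q w. X = (\<Sum>l<r. outer3 (p l) (q l) (w l)))"

lemma rank_le: "decomp X r \<Longrightarrow> tensor_rank X \<le> r"
  unfolding decomp_def tensor_rank_def by (auto intro: Least_le)

lemma rank_decomp: "decomp X r \<Longrightarrow> decomp X (tensor_rank X)"
  unfolding decomp_def tensor_rank_def by (rule LeastI_ex) blast

lemma rank_ge: "decomp X r0 \<Longrightarrow> (\<And>r. decomp X r \<Longrightarrow> n \<le> r) \<Longrightarrow> n \<le> tensor_rank X"
  using rank_decomp by blast

lemma act_sum: fixes r :: nat shows "tensor_act A B C (\<Sum>l<r. F l) = (\<Sum>l<r. tensor_act A B C (F l))"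
  by (induct r) (simp_all add: act_zero act_add)

lemma act_decomp: "decomp X r \<Longrightarrow> decomp (tensor_act A B C X) r"
  unfolding decomp_def apply (clarsimp simp: act_sum act_outer) apply (intro exI) apply (rule refl) done

lemma rank_act_le: "decomp X r \<Longrightarrow> tensor_rank (tensor_act A B C X) \<le> tensor_rank X"
  by (meson act_decomp rank_decomp rank_le)

lemma rank_act_eq:
  assumes "invertible A" "invertible B" "invertible C" "tensor_act A B C X = Y" "decomp Y r"
  shows "tensor_rank X = tensor_rank Y \<and> decomp X r"
proof -
  obtain A' where A': "A' ** A = mat 1" using assms(1) invertible_left_inverse by blast
  obtain B' where B': "B' ** B = mat 1" using assms(2) invertible_left_inverse by blast
  obtain C' where C': "C' ** C = mat 1" using assms(3) invertible_left_inverse by blast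
  have X: "X = tensor_act A' B' C' Y" using assms(4) act_comp act_id A' B' C' by metis
  have dX: "decomp X r" using X act_decomp assms(5) by blast
  show ?thesis using rank_act_le[OF dX, of A B C] rank_act_le[OF assms(5), of A' B' C'] X assms(4) dX by simp
qed
lemma sum5: "(\<Sum>l<(5::nat). F l) = F 0 + F 1 + F 2 + F 3 + (F 4 :: 'a::comm_monoid_add)"
  by (simp add: eval_nat_numeral ac_simps)
lemma sum4n: "(\<Sum>l<(4::nat). F l) = F 0 + F 1 + F 2 + (F 3 :: 'a::comm_monoid_add)"
  by (simp add: eval_nat_numeral ac_simps)
lemma sum3n: "(\<Sum>l<(3::nat). F l) = F 0 + F 1 + (F 2 :: 'a::comm_monoid_add)"
  by (simp add: eval_nat_numeral ac_simps)

lemma scale3_outer: "scale3 s (outer3 a b c) = outer3 (s *s a) b c"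
  unfolding scale3_def outer3_def by (simp add: vec_eq_iff mult.assoc)

lemma decomp_T9: "decomp T9 4"
  unfolding decomp_def
  apply (rule exI[of _ "\<lambda>l. [axis 0 1, axis 0 1, axis 1 1, axis 1 1] ! l"])
  apply (rule exI[of _ "\<lambda>l. [axis 0 1, axis 1 1, axis 0 1, axis 1 1] ! l"])
  apply (rule exI[of _ "\<lambda>l. [axis 0 1, axis 2 1, axis 1 1, axis 3 1] ! l"])
  by (simp add: sum4n T9_def)

lemma decomp_T9s: "decomp (T9 - scale3 s (outer3 a b c)) 5"
  unfolding decomp_def
  apply (rule exI[of _ "\<lambda>l. [axis 0 1, axis 0 1, axis 1 1, axis 1 1, (-s) *s a] ! l"])
  apply (rule exI[of _ "\<lambda>l. [axis 0 1, axis 1 1, axis 0 1, axis 1 1, b] ! l"])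
  apply (rule exI[of _ "\<lambda>l. [axis 0 1, axis 2 1, axis 1 1, axis 3 1, c] ! l"])
  apply (simp add: sum5 T9_def scale3_outer)
  unfolding outer3_def by (simp add: vec_eq_iff)

lemma vec2_nz: "(x::complex^2) \<noteq> 0 \<Longrightarrow> x $ 0 \<noteq> 0 \<or> x $ 1 \<noteq> 0"
  by (auto simp: vec_eq_iff all2)
lemma vec_nz_ex: "(x::complex^'n) \<noteq> 0 \<Longrightarrow> \<exists>i. x $ i \<noteq> 0"
  by (auto simp: vec_eq_iff)

lemma outer3_nz: "a \<noteq> 0 \<Longrightarrow> b \<noteq> 0 \<Longrightarrow> c \<noteq> 0 \<Longrightarrow> outer3 (a::complex^'a) (b::complex^'b) (c::complex^'c) \<noteq> 0"
proof -
  assume "a \<noteq> 0" "b \<noteq> 0" "c \<noteq> 0"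
  then obtain i j k where "a $ i \<noteq> 0" "b $ j \<noteq> 0" "c $ k \<noteq> 0" using vec_nz_ex by metis
  then have "outer3 a b c $ i $ j $ k \<noteq> 0" unfolding outer3_def by simp
  then show ?thesis by auto
qed

lemma rank_outer3: "a \<noteq> 0 \<Longrightarrow> b \<noteq> 0 \<Longrightarrow> c \<noteq> 0 \<Longrightarrow> tensor_rank (outer3 (a::complex^'a) (b::complex^'b) (c::complex^'c)) = 1"
proof -
  assume nz: "a \<noteq> 0" "b \<noteq> 0" "c \<noteq> 0"
  have d: "decomp (outer3 a b c) 1" unfolding decomp_def
    by (rule exI[of _ "\<lambda>l. a"], rule exI[of _ "\<lambda>l. b"], rule exI[of _ "\<lambda>l. c"]) simp
  have "1 \<le> tensor_rank (outer3 a b c)"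
  proof (rule rank_ge[OF d])
    fix r assume "decomp (outer3 a b c) r"
    then show "1 \<le> r" using outer3_nz[OF nz] unfolding decomp_def by (cases r) auto
  qed
  then show ?thesis using rank_le[OF d] by simp
qed

lemma flat_lower:
  assumes hs: "s = 0 \<or> f9 a b c = 0"
    and X: "T9 - scale3 s (outer3 a b c) = (\<Sum>l<(r::nat). outer3 (p l) (q l) (w l))"
  shows "4 \<le> r"
proof (rule ccontr)
  assume "\<not> 4 \<le> r"
  then have r3: "r \<le> 3" by simp
  define M :: "complex^4^4" where "M = (\<chi> k. if k = 0 \<and> 0 < r then w 0 else if k = 1 \<and> 1 < r then w 1
      else if k = 2 \<and> 2 < r then w 2 else 0)"
  have "row 3 M = 0" using r3 by (simp add: row_def M_def vec_eq_iff)
  then have "det M = 0" by (rule det_zero_row(1))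
  then have "\<not> invertible M" using invertible_det_nz by blast
  then obtain z where z: "z \<noteq> 0" "M *v z = 0"
    using invertible_left_inverse matrix_left_invertible_ker by blast
  have orth: "(\<Sum>k\<in>UNIV. w l $ k * z $ k) = 0" if "l < r" for l
  proof -
    have "l = 0 \<or> l = 1 \<or> l = 2" using that r3 by auto
    then show ?thesis
    proof (elim disjE)
      assume "l = 0" then show ?thesis using that z(2) 
        by (auto simp: vec_eq_iff matrix_vector_mult_def M_def dest: spec[of _ 0])
    next
      assume "l = 1" then show ?thesis using that z(2) 
        by (auto simp: vec_eq_iff matrix_vector_mult_def M_def dest: spec[of _ 1])
    next
      assume "l = 2" then show ?thesis using that z(2) 
        by (auto simp: vec_eq_iff matrix_vector_mult_def M_def dest: spec[of _ 2])
    qed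
  qed
  have flat: "(\<Sum>k\<in>UNIV. (T9 - scale3 s (outer3 a b c)) $ i $ j $ k * z $ k) = 0" for i j
  proof -
    have "(\<Sum>k\<in>UNIV. (T9 - scale3 s (outer3 a b c)) $ i $ j $ k * z $ k)
       = (\<Sum>k\<in>UNIV. \<Sum>l<r. p l $ i * q l $ j * (w l $ k * z $ k))"
      unfolding X by (simp add: outer3_def sum_distrib_right mult.assoc)
    also have "\<dots> = (\<Sum>l<r. p l $ i * q l $ j * (\<Sum>k\<in>UNIV. w l $ k * z $ k))"
      by (subst sum.swap) (simp add: sum_distrib_left)
    also have "\<dots> = 0" using orth by simp
    finally show ?thesis .
  qed
  define g where "g = c$0 * z$0 + c$1 * z$1 + c$2 * z$2 + c$3 * z$3"
  have e0: "z$0 = s * a$0 * b$0 * g" using flat[of 0 0]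
    by (simp add: sum4 T9_def outer3_def scale3_def axis_def g_def algebra_simps)
  have e1: "z$1 = s * a$1 * b$0 * g" using flat[of 1 0]
    by (simp add: sum4 T9_def outer3_def scale3_def axis_def g_def algebra_simps)
  have e2: "z$2 = s * a$0 * b$1 * g" using flat[of 0 1]
    by (simp add: sum4 T9_def outer3_def scale3_def axis_def g_def algebra_simps)
  have e3: "z$3 = s * a$1 * b$1 * g" using flat[of 1 1]
    by (simp add: sum4 T9_def outer3_def scale3_def axis_def g_def algebra_simps)
  have "g = s * g * f9 a b c" unfolding f9_def
    by (subst g_def, simp only: e0 e1 e2 e3) (simp add: algebra_simps)
  then have "g = 0" using hs by auto
  then have "z = 0" using e0 e1 e2 e3 by (simp add: vec_eq_iff all4)
  then show False using z(1) by simp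
qed
definition mk2 :: "complex \<Rightarrow> complex \<Rightarrow> complex^2" where
  "mk2 x y = (\<chi> i. if i = 0 then x else y)"
definition fl :: "complex^2 \<Rightarrow> complex^2 \<Rightarrow> complex^4" where
  "fl x y = (\<chi> k. if k = 0 then x$0*y$0 else if k = 1 then x$1*y$0 else if k = 2 then x$0*y$1 else x$1*y$1)"

lemma mk2_simps[simp]: "mk2 x y $ 0 = x" "mk2 x y $ 1 = y" by (simp_all add: mk2_def)
lemma fl_simps[simp]: "fl x y $ 0 = x$0*y$0" "fl x y $ 1 = x$1*y$0" "fl x y $ 2 = x$0*y$1" "fl x y $ 3 = x$1*y$1"
  by (simp_all add: fl_def)

lemma ring_id:
  fixes a a2 b b2 :: "complex^'n" and h1 h2 h3 :: "complex^'m"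
  shows "outer3 a b (w1 *s h1 + w2 *s h2 + w3 *s h3) + outer3 a b2 h2 + outer3 a2 b h1 + outer3 a2 b2 h3
   = outer3 (w1 *s a + a2) b (h1 - (w3 + (w1+1)*w2) *s h3) + outer3 a (w2 *s b + b2) (h2 - (w1+1) *s h3)
     + outer3 ((w1+1) *s a + a2) ((w3 + (w1+1)*w2) *s b + b2) h3"
  unfolding outer3_def by (simp add: vec_eq_iff algebra_simps)

lemma upper3:
  fixes a a2 b b2 :: "complex^2" and c :: "complex^4"
  assumes ha: "a$0 * a2$1 - a2$0 * a$1 = 1" and hb: "b$0 * b2$1 - b2$0 * b$1 = 1"
    and hs: "s * f9 a b c = 1"
  shows "decomp (T9 - scale3 s (outer3 a b c)) 3"
proof -
  define ua where "ua = mk2 (a2$1) (-a2$0)"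
  define ua2 where "ua2 = mk2 (-a$1) (a$0)"
  define vb where "vb = mk2 (b2$1) (-b2$0)"
  define vb2 where "vb2 = mk2 (-b$1) (b$0)"
  define g11 where "g11 = fl ua vb"
  define g12 where "g12 = fl ua vb2"
  define g21 where "g21 = fl ua2 vb"
  define g22 where "g22 = fl ua2 vb2"
  have F1: "T9 = outer3 a b g11 + outer3 a b2 g12 + outer3 a2 b g21 + outer3 a2 b2 g22"
    unfolding vec_eq_iff all2 all4
    apply (simp add: T9_def outer3_def axis_def g11_def g12_def g21_def g22_def ua_def ua2_def vb_def vb2_def)
    apply (intro conjI)
    apply (use ha hb in algebra)+
    done
  have F2: "z = f9 a b z *s g11 + f9 a b2 z *s g12 + f9 a2 b z *s g21 + f9 a2 b2 z *s g22" for z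
    unfolding vec_eq_iff all4
    apply (simp add: f9_def g11_def g12_def g21_def g22_def ua_def ua2_def vb_def vb2_def)
    apply (intro conjI)
    apply (use ha hb in algebra)+
    done
  have f11: "f9 a b g11 = 1"
    apply (simp add: f9_def g11_def ua_def vb_def)
    apply (use ha hb in algebra)
    done
  define w where "w = g11 - s *s c"
  have fw: "f9 a b w = 0" using f11 hs unfolding w_def f9_def by (simp add: algebra_simps)
  define w1 where "w1 = f9 a2 b w"
  define w2 where "w2 = f9 a b2 w"
  define w3 where "w3 = f9 a2 b2 w"
  have wexp: "w = w1 *s g21 + w2 *s g12 + w3 *s g22"
    using F2[of w] fw unfolding w1_def w2_def w3_def by (simp add: algebra_simps)
  have S: "T9 - scale3 s (outer3 a b c) = outer3 a b w + outer3 a b2 g12 + outer3 a2 b g21 + outer3 a2 b2 g22"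
    apply (subst F1)
    unfolding w_def outer3_def scale3_def by (simp add: vec_eq_iff algebra_simps)
  have E: "T9 - scale3 s (outer3 a b c) = outer3 (w1 *s a + a2) b (g21 - (w3 + (w1+1)*w2) *s g22)
      + outer3 a (w2 *s b + b2) (g12 - (w1+1) *s g22)
      + outer3 ((w1+1) *s a + a2) ((w3 + (w1+1)*w2) *s b + b2) g22"
    unfolding S wexp by (rule ring_id)
  show ?thesis unfolding decomp_def
    apply (rule exI[of _ "\<lambda>l. [w1 *s a + a2, a, (w1+1) *s a + a2] ! l"])
    apply (rule exI[of _ "\<lambda>l. [b, w2 *s b + b2, (w3 + (w1+1)*w2) *s b + b2] ! l"])
    apply (rule exI[of _ "\<lambda>l. [g21 - (w3 + (w1+1)*w2) *s g22, g12 - (w1+1) *s g22, g22] ! l"])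
    by (simp add: sum3n E)
qed

lemma compl_ex: assumes "(a::complex^2) \<noteq> 0" shows "\<exists>a2::complex^2. a$0 * a2$1 - a2$0 * a$1 = 1"
proof (cases "a$0 = 0")
  case True
  then have "a$1 \<noteq> 0" using vec2_nz[OF assms] by simp
  then have "a$0 * (mk2 (-1/a$1) 0)$1 - (mk2 (-1/a$1) 0)$0 * a$1 = 1" using True by simp
  then show ?thesis by blast
next
  case False
  then have "a$0 * (mk2 0 (1/a$0))$1 - (mk2 0 (1/a$0))$0 * a$1 = 1" by simp
  then show ?thesis by blast
qed
lemma inv_nz: "invertible (M::complex^'n^'n) \<Longrightarrow> x \<noteq> 0 \<Longrightarrow> M *v x \<noteq> 0"
  using invertible_left_inverse matrix_left_invertible_ker by blast

lemma T9_s0: "T9 - scale3 0 Y = T9"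
  by (simp add: scale3_def vec_eq_iff)

lemma rank_T9: "tensor_rank T9 = 4"
proof -
  have "4 \<le> tensor_rank T9"
  proof (rule rank_ge[OF decomp_T9])
    fix r assume "decomp T9 r"
    then obtain p q w where "T9 = (\<Sum>l<r. outer3 (p l) (q l) (w l))" unfolding decomp_def by blast
    then have "T9 - scale3 0 (outer3 (0::complex^2) (0::complex^2) (0::complex^4)) = (\<Sum>l<r. outer3 (p l) (q l) (w l))"
      by (simp add: T9_s0)
    then show "4 \<le> r" by (rule flat_lower[rotated]) simp
  qed
  then show ?thesis using rank_le[OF decomp_T9] by simp
qed

lemma rank_T9s_ge: assumes "f9 a b c = 0" shows "4 \<le> tensor_rank (T9 - scale3 s (outer3 a b c))"
proof (rule rank_ge[OF decomp_T9s])
  fix r assume "decomp (T9 - scale3 s (outer3 a b c)) r"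
  then obtain p q w where "T9 - scale3 s (outer3 a b c) = (\<Sum>l<r. outer3 (p l) (q l) (w l))" unfolding decomp_def by blast
  then show "4 \<le> r" using flat_lower assms by blast
qed

lemma rank_T9s_lt: assumes "f9 a b c \<noteq> 0" "a \<noteq> 0" "b \<noteq> 0"
  shows "tensor_rank (T9 - scale3 (1 / f9 a b c) (outer3 a b c)) < 4"
proof -
  obtain a2 :: "complex^2" where "a$0 * a2$1 - a2$0 * a$1 = 1" using compl_ex assms(2) by blast
  moreover obtain b2 :: "complex^2" where "b$0 * b2$1 - b2$0 * b$1 = 1" using compl_ex assms(3) by blast
  moreover have "(1 / f9 a b c) * f9 a b c = 1" using assms(1) by simp
  ultimately have "decomp (T9 - scale3 (1 / f9 a b c) (outer3 a b c)) 3" by (rule upper3)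
  then show ?thesis using rank_le by fastforce
qed
theorem proposition5p1:
  fixes T :: "complex^4^2^2"
    and A :: "complex^2^2" and B :: "complex^2^2" and C :: "complex^4^4"
    and a :: "complex^2" and b :: "complex^2" and c :: "complex^4"
  assumes "invertible A" and "invertible B" and "invertible C"
    and "tensor_act A B C T = T9"
    and "a \<noteq> 0" and "b \<noteq> 0" and "c \<noteq> 0"
  shows "outer3 a b c \<in> forbidden_locus T \<longleftrightarrow> f9 (A *v a) (B *v b) (C *v c) = 0"
proof -
  have na: "A *v a \<noteq> 0" using inv_nz assms by blast
  have nb: "B *v b \<noteq> 0" using inv_nz assms by blast
  have key: "tensor_act A B C (T - scale3 s (outer3 a b c)) = T9 - scale3 s (outer3 (A *v a) (B *v b) (C *v c))" for s
    by (simp add: act_diff act_outer assms(4))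
  have rk: "tensor_rank (T - scale3 s (outer3 a b c)) = tensor_rank (T9 - scale3 s (outer3 (A *v a) (B *v b) (C *v c)))" for s
    using rank_act_eq[OF assms(1-3) key decomp_T9s] by blast
  have rT: "tensor_rank T = 4"
    using rank_act_eq[OF assms(1-4) decomp_T9] rank_T9 by simp
  have rP: "tensor_rank (outer3 a b c) = 1" using rank_outer3 assms(5-7) by blast
  have "outer3 a b c \<in> forbidden_locus T \<longleftrightarrow>
      (\<forall>s. 4 \<le> tensor_rank (T9 - scale3 s (outer3 (A *v a) (B *v b) (C *v c))))"
    unfolding forbidden_locus_def using rk rT rP by simp
  also have "\<dots> \<longleftrightarrow> f9 (A *v a) (B *v b) (C *v c) = 0"
  proof
    assume h: "\<forall>s. 4 \<le> tensor_rank (T9 - scale3 s (outer3 (A *v a) (B *v b) (C *v c)))"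
    show "f9 (A *v a) (B *v b) (C *v c) = 0"
    proof (rule ccontr)
      assume "f9 (A *v a) (B *v b) (C *v c) \<noteq> 0"
      from rank_T9s_lt[OF this na nb] h show False by (meson not_le)
    qed
  next
    assume "f9 (A *v a) (B *v b) (C *v c) = 0"
    then show "\<forall>s. 4 \<le> tensor_rank (T9 - scale3 s (outer3 (A *v a) (B *v b) (C *v c)))"
      using rank_T9s_ge by blast
  qed
  finally show ?thesis .
qed
end
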